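(* Let $\mathcal V$ be a congruence modular variety with Day terms $m_0,\dots,m_k$, $\mathbb A\in\mathcal V$, $n\ge 2$, and $R\le\mathbb A^{2^n}$ an $(n)$-dimensional tolerance of $\mathbb A$. Let $\gamma\in R$ and let $d\in\mathbb D_n$ be a sequence of length $i\in n$. Then (1) $\gamma^d\in R$, and (2) for every $f\in 2^{n\setminus\{i\}}$ such that $f(j)=0$ for some $j<i$, the $(i)$-cross-section line of $\gamma^d$ at $f$ is a constant pair (a pair $(a,a)$).
   Context: Cube notation. $n=\{0,\dots,n-1\}$, $2=\{0,1\}$; $2^n$ is the set of functions $n\to 2$. An $(n)$-cube over $A$ is $\gamma=(\gamma_f)_{f\in2^n}\in A^{2^n}$. For $i\in n$, $j\in 2$: $\mathrm{face}_i^j(\gamma)$ is $g\mapsto\gamma_{g\cup\{(i,j)\}}$; $\mathrm{glue}_{\{i\}}(\zeta,\eta)$ is the unique cube with $\mathrm{face}_i^0=\zeta$, $\mathrm{face}_i^1=\eta$; $\mathrm{refl}_i^j(\gamma)=\mathrm{glue}_{\{i\}}(\mathrm{face}_i^j\gamma,\mathrm{face}_i^j\gamma)$; $\mathrm{sym}_i(\gamma)=\mathrm{glue}_{\{i\}}(\mathrm{face}_i^1\gamma,\mathrm{face}_i^0\gamma)$. For $f\in 2^{n\setminus\{i\}}$ the $(i)$-cross-section line of $\gamma$ at $f$ is the pair $(\gamma_{f\cup\{(i,0)\}},\gamma_{f\cup\{(i,1)\}})$. A subuniverse $R$ of $\mathbb A^{2^n}$ is an $(n)$-dimensional tolerance if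 $\mathrm{refl}_i^j(\gamma),\mathrm{sym}_i(\gamma)\in R$ for all $\gamma\in R$, $i,j$. Day terms: $4$-ary terms $m_0,\dots,m_k$ with $m_0(x,y,z,w)\approx x$, $m_k(x,y,z,w)\approx w$, $m_e(x,y,y,x)\approx x$ for all $e$, $m_e(x,x,w,w)\approx m_{e+1}(x,x,w,w)$ for even $e<k$, $m_e(x,y,y,w)\approx m_{e+1}(x,y,y,w)$ for odd $e<k$; a variety is modular iff it has Day terms. Shift rotation: for $e\in\{0,\dots,k\}$ and $i\neq j\in n$, $\mathrm{rot}^e_{i,j}(\gamma)=m_e\big(\mathrm{refl}_j^1(\gamma),\gamma,\mathrm{refl}_i^0(\gamma),\mathrm{refl}_j^1(\mathrm{refl}_i^0(\gamma))\big)$ (coordinatewise). Tree. $\mathbb D_n$ is the set of finite sequences of elements of $\{0,\dots,k\}$ of length less than $n$ (including the empty sequence $\emptyset$), ordered by extension. For $\gamma\in A^{2^n}$ set $\gamma^\emptyset=\gamma$ and, for a nonempty $d=(d_0,\dots,d_i)\in\mathbb D_n$ with predecessor $c=(d_0,\dots,d_{i-1})$, $\gamma^d=\mathrm{rot}^{d_i}_{i,i+1}(\gamma^c)$. *)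

theory Defs
  imports Main "HOL-Library.FuncSet"
begin

datatype 'f trm = Var nat | App 'f "'f trm list"

fun wf_trm :: "('f \<Rightarrow> nat) \<Rightarrow> nat \<Rightarrow> 'f trm \<Rightarrow> bool" where
  "wf_trm ar nv (Var v) = (v < nv)"
| "wf_trm ar nv (App f ts) = (length ts = ar f \<and> (\<forall>t\<in>set ts. wf_trm ar nv t))"

fun tev :: "('f \<Rightarrow> 'a list \<Rightarrow> 'a) \<Rightarrow> (nat \<Rightarrow> 'a) \<Rightarrow> 'f trm \<Rightarrow> 'a" where
  "tev I env (Var v) = env v"
| "tev I env (App f ts) = I f (map (tev I env) ts)"

definition is_algebra :: "'a set \<Rightarrow> ('f \<Rightarrow> nat) \<Rightarrow> ('f \<Rightarrow> 'a list \<Rightarrow> 'a) \<Rightarrow> bool" where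
  "is_algebra A ar I \<longleftrightarrow> A \<noteq> {} \<and>
     (\<forall>f xs. length xs = ar f \<longrightarrow> set xs \<subseteq> A \<longrightarrow> I f xs \<in> A)"

definition tev4 :: "('f \<Rightarrow> 'a list \<Rightarrow> 'a) \<Rightarrow> 'f trm \<Rightarrow> 'a \<Rightarrow> 'a \<Rightarrow> 'a \<Rightarrow> 'a \<Rightarrow> 'a" where
  "tev4 I t x y z w = tev I (\<lambda>v. [x, y, z, w] ! v) t"

definition day_terms :: "'a set \<Rightarrow> ('f \<Rightarrow> nat) \<Rightarrow> ('f \<Rightarrow> 'a list \<Rightarrow> 'a) \<Rightarrow> nat \<Rightarrow> 'f trm list \<Rightarrow> bool" where
  "day_terms A ar I k ms \<longleftrightarrow> length ms = Suc k \<and> (\<forall>t\<in>set ms. wf_trm ar 4 t) \<and>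
    (\<forall>x\<in>A. \<forall>y\<in>A. \<forall>z\<in>A. \<forall>w\<in>A.
       tev4 I (ms ! 0) x y z w = x \<and>
       tev4 I (ms ! k) x y z w = w \<and>
       (\<forall>e\<le>k. tev4 I (ms ! e) x y y x = x) \<and>
       (\<forall>e<k. even e \<longrightarrow> tev4 I (ms ! e) x x w w = tev4 I (ms ! Suc e) x x w w) \<and>
       (\<forall>e<k. odd e \<longrightarrow> tev4 I (ms ! e) x y y w = tev4 I (ms ! Suc e) x y y w))"

text \<open>2^S for S \<subseteq> nat: the functions S -> {0,1} (extensional). 2^n = two_pow {..<n}.\<close>
definition two_pow :: "nat set \<Rightarrow> (nat \<Rightarrow> nat) set" where
  "two_pow S = S \<rightarrow>\<^sub>E {0, 1}"

definition cubes :: "'a set \<Rightarrow> nat \<Rightarrow> ((nat \<Rightarrow> nat) \<Rightarrow> 'a) set" where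
  "cubes A n = two_pow {..<n} \<rightarrow>\<^sub>E A"

definition face :: "nat \<Rightarrow> nat \<Rightarrow> nat \<Rightarrow> ((nat \<Rightarrow> nat) \<Rightarrow> 'a) \<Rightarrow> ((nat \<Rightarrow> nat) \<Rightarrow> 'a)" where
  "face n i j \<gamma> = (\<lambda>g\<in>two_pow ({..<n} - {i}). \<gamma> (g(i := j)))"

definition glue :: "nat \<Rightarrow> nat \<Rightarrow> ((nat \<Rightarrow> nat) \<Rightarrow> 'a) \<Rightarrow> ((nat \<Rightarrow> nat) \<Rightarrow> 'a) \<Rightarrow> ((nat \<Rightarrow> nat) \<Rightarrow> 'a)" where
  "glue n i \<zeta> \<eta> = (\<lambda>f\<in>two_pow {..<n}.
      if f i = 0 then \<zeta> (f(i := undefined)) else \<eta> (f(i := undefined)))"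

definition refl_c :: "nat \<Rightarrow> nat \<Rightarrow> nat \<Rightarrow> ((nat \<Rightarrow> nat) \<Rightarrow> 'a) \<Rightarrow> ((nat \<Rightarrow> nat) \<Rightarrow> 'a)" where
  "refl_c n i j \<gamma> = glue n i (face n i j \<gamma>) (face n i j \<gamma>)"

definition sym_c :: "nat \<Rightarrow> nat \<Rightarrow> ((nat \<Rightarrow> nat) \<Rightarrow> 'a) \<Rightarrow> ((nat \<Rightarrow> nat) \<Rightarrow> 'a)" where
  "sym_c n i \<gamma> = glue n i (face n i 1 \<gamma>) (face n i 0 \<gamma>)"

definition subuniverse_pow :: "'a set \<Rightarrow> ('f \<Rightarrow> nat) \<Rightarrow> ('f \<Rightarrow> 'a list \<Rightarrow> 'a) \<Rightarrow> nat
    \<Rightarrow> ((nat \<Rightarrow> nat) \<Rightarrow> 'a) set \<Rightarrow> bool" where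
  "subuniverse_pow A ar I n R \<longleftrightarrow> R \<subseteq> cubes A n \<and>
     (\<forall>f gs. length gs = ar f \<longrightarrow> set gs \<subseteq> R \<longrightarrow>
        (\<lambda>x\<in>two_pow {..<n}. I f (map (\<lambda>g. g x) gs)) \<in> R)"

definition tolerance :: "'a set \<Rightarrow> ('f \<Rightarrow> nat) \<Rightarrow> ('f \<Rightarrow> 'a list \<Rightarrow> 'a) \<Rightarrow> nat
    \<Rightarrow> ((nat \<Rightarrow> nat) \<Rightarrow> 'a) set \<Rightarrow> bool" where
  "tolerance A ar I n R \<longleftrightarrow> subuniverse_pow A ar I n R \<and>
     (\<forall>\<gamma>\<in>R. \<forall>i<n. (\<forall>j\<in>{0,1}. refl_c n i j \<gamma> \<in> R) \<and> sym_c n i \<gamma> \<in> R)"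

definition rot :: "('f \<Rightarrow> 'a list \<Rightarrow> 'a) \<Rightarrow> 'f trm list \<Rightarrow> nat \<Rightarrow> nat \<Rightarrow> nat \<Rightarrow> nat
    \<Rightarrow> ((nat \<Rightarrow> nat) \<Rightarrow> 'a) \<Rightarrow> ((nat \<Rightarrow> nat) \<Rightarrow> 'a)" where
  "rot I ms n e i j \<gamma> = (\<lambda>f\<in>two_pow {..<n}.
      tev4 I (ms ! e) (refl_c n j 1 \<gamma> f) (\<gamma> f) (refl_c n i 0 \<gamma> f)
        (refl_c n j 1 (refl_c n i 0 \<gamma>) f))"

text \<open>gamma^d for d = (d_0,...,d_(l-1)): gamma^[] = gamma and
gamma^(c @ [x]) = rot^x_{|c|,|c|+1}(gamma^c).\<close>
primrec tree_cube_rev :: "('f \<Rightarrow> 'a list \<Rightarrow> 'a) \<Rightarrow> 'f trm list \<Rightarrow> nat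
    \<Rightarrow> ((nat \<Rightarrow> nat) \<Rightarrow> 'a) \<Rightarrow> nat list \<Rightarrow> ((nat \<Rightarrow> nat) \<Rightarrow> 'a)" where
  "tree_cube_rev I ms n \<gamma> [] = \<gamma>"
| "tree_cube_rev I ms n \<gamma> (x # c) = rot I ms n x (length c) (Suc (length c)) (tree_cube_rev I ms n \<gamma> c)"

definition tree_cube :: "('f \<Rightarrow> 'a list \<Rightarrow> 'a) \<Rightarrow> 'f trm list \<Rightarrow> nat
    \<Rightarrow> ((nat \<Rightarrow> nat) \<Rightarrow> 'a) \<Rightarrow> nat list \<Rightarrow> ((nat \<Rightarrow> nat) \<Rightarrow> 'a)" where
  "tree_cube I ms n \<gamma> d = tree_cube_rev I ms n \<gamma> (rev d)"

lemma tree_cube_Nil: "tree_cube I ms n \<gamma> [] = \<gamma>"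
  by (simp add: tree_cube_def)

lemma tree_cube_snoc:
  "tree_cube I ms n \<gamma> (c @ [x]) = rot I ms n x (length c) (Suc (length c)) (tree_cube I ms n \<gamma> c)"
  by (simp add: tree_cube_def)

definition tree_D :: "nat \<Rightarrow> nat \<Rightarrow> nat list set" where
  "tree_D k n = {d. length d < n \<and> (\<forall>x\<in>set d. x \<le> k)}"

end

theory Submission
  imports Defs
begin

lemma tp_upd: "f \<in> two_pow S \<Longrightarrow> i \<in> S \<Longrightarrow> a \<in> {0,1} \<Longrightarrow> f(i := a) \<in> two_pow S"
  unfolding two_pow_def by (auto simp: PiE_iff extensional_def)

lemma tp_ext: "f \<in> two_pow (S - {i}) \<Longrightarrow> i \<in> S \<Longrightarrow> a \<in> {0,1} \<Longrightarrow> f(i := a) \<in> two_pow S"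
  unfolding two_pow_def by (auto simp: PiE_iff extensional_def)

lemma tp_val: "f \<in> two_pow S \<Longrightarrow> p \<in> S \<Longrightarrow> f p \<in> {0,1}"
  unfolding two_pow_def by (auto simp: PiE_iff)

lemma tp_und: "f \<in> two_pow (S - {i}) \<Longrightarrow> i \<in> S \<Longrightarrow> p \<in> S \<Longrightarrow> p \<noteq> i \<Longrightarrow> a \<in> {0,1}
   \<Longrightarrow> f(i := a, p := undefined) \<in> two_pow (S - {p})"
  unfolding two_pow_def by (auto simp: PiE_iff extensional_def)

lemma refl_c_eval:
  assumes "f \<in> two_pow {..<n}" "i < n"
  shows "refl_c n i j \<gamma> f = \<gamma> (f(i := j))"
proof -
  have "f(i := undefined) \<in> two_pow ({..<n} - {i})"
    using assms unfolding two_pow_def by (auto simp: PiE_iff extensional_def)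
  then show ?thesis using assms
    unfolding refl_c_def glue_def face_def by auto
qed

lemma rot_eval:
  assumes "f \<in> two_pow {..<n}" "i < n" "j < n"
  shows "rot I ms n e i j \<gamma> f = tev4 I (ms ! e) (\<gamma> (f(j := 1))) (\<gamma> f) (\<gamma> (f(i := 0)))
            (\<gamma> (f(j := 1, i := 0)))"
proof -
  have "f(j := 1) \<in> two_pow {..<n}" using assms tp_upd by fastforce
  then show ?thesis using assms unfolding rot_def by (simp add: refl_c_eval)
qed

lemma term_closed:
  assumes sub: "subuniverse_pow A ar I n R"
    and g: "g0 \<in> R" "g1 \<in> R" "g2 \<in> R" "g3 \<in> R"
  shows "wf_trm ar 4 t \<Longrightarrow>
    (\<lambda>x\<in>two_pow {..<n}. tev I (\<lambda>v. [g0 x, g1 x, g2 x, g3 x] ! v) t) \<in> R"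
proof (induction t)
  case (Var v)
  have ext: "\<And>g. g \<in> R \<Longrightarrow> (\<lambda>x\<in>two_pow {..<n}. g x) = g"
    using sub unfolding subuniverse_pow_def cubes_def
    by (metis (no_types, lifting) PiE_restrict subsetD)
  have "v < 4" using Var by simp
  then have "v = 0 \<or> v = 1 \<or> v = 2 \<or> v = 3" by auto
  then show ?case
  proof (elim disjE)
    assume "v = 0" then show ?case using ext[OF g(1)] g(1) by simp
  next
    assume "v = 1" then show ?case using ext[OF g(2)] g(2) by simp
  next
    assume "v = 2" then show ?case using ext[OF g(3)] g(3) by (simp add: numeral_2_eq_2)
  next
    assume "v = 3" then show ?case using ext[OF g(4)] g(4) by (simp add: numeral_3_eq_3)
  qed
next
  case (App f ts)
  define gs where "gs = map (\<lambda>t. \<lambda>x\<in>two_pow {..<n}. tev I (\<lambda>v. [g0 x, g1 x, g2 x, g3 x] ! v) t) ts"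
  have "length gs = ar f" using App.prems by (simp add: gs_def)
  moreover have "set gs \<subseteq> R" using App by (auto simp: gs_def restrict_def)
  ultimately have "(\<lambda>x\<in>two_pow {..<n}. I f (map (\<lambda>g. g x) gs)) \<in> R"
    using sub unfolding subuniverse_pow_def by blast
  moreover have "(\<lambda>x\<in>two_pow {..<n}. I f (map (\<lambda>g. g x) gs)) =
     (\<lambda>x\<in>two_pow {..<n}. tev I (\<lambda>v. [g0 x, g1 x, g2 x, g3 x] ! v) (App f ts))"
    by (rule restrict_ext) (simp add: gs_def comp_def)
  ultimately show ?case by (simp add: restrict_def)
qed

lemma main:
  assumes alg: "is_algebra A ar I"
    and day: "day_terms A ar I k ms"
    and tol: "tolerance A ar I n R"
    and gR: "\<gamma> \<in> R"
  shows "length c < n \<Longrightarrow> (\<forall>x\<in>set c. x \<le> k) \<Longrightarrow> tree_cube_rev I ms n \<gamma> c \<in> R \<and>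
    (\<forall>f\<in>two_pow ({..<n} - {length c}). (\<exists>j<length c. f j = 0) \<longrightarrow>
       tree_cube_rev I ms n \<gamma> c (f(length c := 0)) = tree_cube_rev I ms n \<gamma> c (f(length c := 1)))"
proof (induction c)
  case Nil
  then show ?case using gR by simp
next
  case (Cons x c)
  define p where "p = length c"
  define \<delta> where "\<delta> = tree_cube_rev I ms n \<gamma> c"
  have pn: "p < n" "Suc p < n" using Cons.prems by (auto simp: p_def)
  have xk: "x \<le> k" using Cons.prems by simp
  have IH: "\<delta> \<in> R" "\<And>f j. f\<in>two_pow ({..<n} - {p}) \<Longrightarrow> j < p \<Longrightarrow> f j = 0 \<Longrightarrow>
       \<delta> (f(p := 0)) = \<delta> (f(p := 1))"
  proof -
    have "length c < n" "\<forall>x\<in>set c. x \<le> k" using Cons.prems by auto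
    then have H: "tree_cube_rev I ms n \<gamma> c \<in> R \<and>
    (\<forall>f\<in>two_pow ({..<n} - {length c}). (\<exists>j<length c. f j = 0) \<longrightarrow>
       tree_cube_rev I ms n \<gamma> c (f(length c := 0)) = tree_cube_rev I ms n \<gamma> c (f(length c := 1)))"
      by (rule Cons.IH)
    show "\<delta> \<in> R" using H unfolding \<delta>_def by blast
    show "\<And>f j. f\<in>two_pow ({..<n} - {p}) \<Longrightarrow> j < p \<Longrightarrow> f j = 0 \<Longrightarrow>
       \<delta> (f(p := 0)) = \<delta> (f(p := 1))" using H unfolding \<delta>_def p_def by blast
  qed
  have sub: "subuniverse_pow A ar I n R" using tol by (simp add: tolerance_def)
  have refl: "\<And>g i j. g \<in> R \<Longrightarrow> i < n \<Longrightarrow> j \<in> {0,1} \<Longrightarrow> refl_c n i j g \<in> R"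
    using tol unfolding tolerance_def by blast
  have cub: "\<And>g. g \<in> R \<Longrightarrow> g \<in> cubes A n" using sub by (auto simp: subuniverse_pow_def)
  have wf: "wf_trm ar 4 (ms ! x)" using day xk by (auto simp: day_terms_def)
  have mxyyx: "\<And>a b. a \<in> A \<Longrightarrow> b \<in> A \<Longrightarrow> tev4 I (ms ! x) a b b a = a"
    using day xk unfolding day_terms_def by blast
  have rotR: "rot I ms n x p (Suc p) \<delta> \<in> R"
  proof -
    have r1: "refl_c n (Suc p) 1 \<delta> \<in> R" using refl[OF IH(1) pn(2)] by simp
    have r2: "refl_c n p 0 \<delta> \<in> R" using refl[OF IH(1) pn(1)] by simp
    have r3: "refl_c n (Suc p) 1 (refl_c n p 0 \<delta>) \<in> R" using refl[OF r2 pn(2)] by simp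
    have T: "(\<lambda>z\<in>two_pow {..<n}. tev I (\<lambda>v. [refl_c n (Suc p) 1 \<delta> z, \<delta> z, refl_c n p 0 \<delta> z, refl_c n (Suc p) 1 (refl_c n p 0 \<delta>) z] ! v) (ms ! x)) \<in> R"
      by (rule term_closed[OF sub r1 IH(1) r2 r3 wf])
    show ?thesis using T by (simp only: rot_def tev4_def)
  qed
  have dA: "\<And>g. g \<in> two_pow {..<n} \<Longrightarrow> \<delta> g \<in> A"
    using cub[OF IH(1)] unfolding cubes_def by auto
  have line: "rot I ms n x p (Suc p) \<delta> (f(Suc p := 0)) = rot I ms n x p (Suc p) \<delta> (f(Suc p := 1))"
    if f: "f \<in> two_pow ({..<n} - {Suc p})" and j: "j < Suc p" "f j = 0" for f j
  proof -
    let ?i = "Suc p"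
    have f0: "f(?i := 0) \<in> two_pow {..<n}" by (rule tp_ext[OF f]) (use pn in auto)
    have f1: "f(?i := 1) \<in> two_pow {..<n}" by (rule tp_ext[OF f]) (use pn in auto)
    have fp: "f p \<in> {0,1}" by (rule tp_val[OF f]) (use pn in auto)
    have A0: "\<delta> (f(?i := 0)) \<in> A" "\<delta> (f(?i := 1)) \<in> A" using dA[OF f0] dA[OF f1] by auto
    have key: "\<delta> (f(?i := a, p := 0)) = \<delta> (f(?i := a))" if a: "a \<in> {0,1}" for a
    proof (cases "j = p")
      case True
      then have "f(?i := a, p := 0) = f(?i := a)" using j by (auto simp: fun_eq_iff)
      then show ?thesis by simp
    next
      case False
      then have jp: "j < p" using j by simp
      define h where "h = f(?i := a, p := undefined)"
      have h: "h \<in> two_pow ({..<n} - {p})"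
        unfolding h_def by (rule tp_und[OF f _ _ _ a]) (use pn in auto)
      have "h j = 0" using j jp by (simp add: h_def)
      then have eq: "\<delta> (h(p := 0)) = \<delta> (h(p := 1))" using IH(2)[OF h jp] by simp
      have "f(?i := a) = h(p := f p)" by (auto simp: h_def fun_eq_iff)
      moreover have "f(?i := a, p := 0) = h(p := 0)" by (auto simp: h_def fun_eq_iff)
      ultimately show ?thesis using eq fp by auto
    qed
    have s1: "f(?i := 0, ?i := 1) = f(?i := 1)" "f(?i := 1, ?i := 1) = f(?i := 1)"
      "f(?i := 0, ?i := 1, p := 0) = f(?i := 1, p := 0)" 
      "f(?i := 1, ?i := 1, p := 0) = f(?i := 1, p := 0)" by auto
    have s2: "f(?i := 0, p := 0) = f(p := 0, ?i := 0)" "f(?i := 1, p := 0) = f(p:=0, ?i := 1)"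
      by (auto simp: fun_eq_iff)
    have k0: "\<delta> (f(?i := 0, p := 0)) = \<delta> (f(?i := 0))" by (rule key) simp
    have k1: "\<delta> (f(?i := 1, p := 0)) = \<delta> (f(?i := 1))" by (rule key) simp
    have "rot I ms n x p (Suc p) \<delta> (f(?i := 0)) = tev4 I (ms ! x) (\<delta> (f(?i := 1))) (\<delta> (f(?i := 0))) (\<delta> (f(?i := 0))) (\<delta> (f(?i := 1)))"
      unfolding rot_eval[OF f0 pn] s1 k0 k1 ..
    also have "\<dots> = \<delta> (f(?i := 1))" using mxyyx A0 by blast
    finally have e0: "rot I ms n x p (Suc p) \<delta> (f(?i := 0)) = \<delta> (f(?i := 1))" .
    have "rot I ms n x p (Suc p) \<delta> (f(?i := 1)) = tev4 I (ms ! x) (\<delta> (f(?i := 1))) (\<delta> (f(?i := 1))) (\<delta> (f(?i := 1))) (\<delta> (f(?i := 1)))"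
      unfolding rot_eval[OF f1 pn] s1 k0 k1 ..
    also have "\<dots> = \<delta> (f(?i := 1))" using mxyyx A0 by blast
    finally have e1: "rot I ms n x p (Suc p) \<delta> (f(?i := 1)) = \<delta> (f(?i := 1))" .
    show ?thesis using e0 e1 by simp
  qed
  have L: "length (x # c) = Suc p" by (simp add: p_def)
  have T: "tree_cube_rev I ms n \<gamma> (x # c) = rot I ms n x p (Suc p) \<delta>" by (simp add: p_def \<delta>_def)
  show ?case unfolding L T using rotR line by blast
qed

theorem lemma2p4:
  fixes A :: "'a set" and ar :: "'f \<Rightarrow> nat" and I :: "'f \<Rightarrow> 'a list \<Rightarrow> 'a"
    and k n i :: nat and ms :: "'f trm list"
    and R :: "((nat \<Rightarrow> nat) \<Rightarrow> 'a) set" and \<gamma> :: "(nat \<Rightarrow> nat) \<Rightarrow> 'a" and d :: "nat list"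
  assumes alg: "is_algebra A ar I"
    and day: "day_terms A ar I k ms"
    and n2: "n \<ge> 2"
    and tol: "tolerance A ar I n R"
    and gR: "\<gamma> \<in> R"
    and dD: "d \<in> tree_D k n"
    and len: "length d = i"
  shows "tree_cube I ms n \<gamma> d \<in> R \<and>
    (\<forall>f\<in>two_pow ({..<n} - {i}). (\<exists>j<i. f j = 0) \<longrightarrow>
       tree_cube I ms n \<gamma> d (f(i := 0)) = tree_cube I ms n \<gamma> d (f(i := 1)))"
  using main[OF alg day tol gR, of "rev d"] dD len
  by (simp add: tree_cube_def tree_D_def)

end
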